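(* Let $Q\in\mathbb{R}^{n\times n}$ be symmetric positive definite, $g\in\mathbb{R}^n$, $\sigma\in(0,1/2]$, $tol\ge 0$. There exist constants $\delta_2>0$ and $\bar K\in\mathbb{N}$ (depending only on $Q,g,\sigma,tol,n$) such that, for any iteration of the generic random active set method and conditional on the history up to that iteration, the probability that the method stops within the subsequent $\bar K$ iterations is at least $\delta_2$.
   Context: Consider the problem $\min_{x\in\mathbb{R}^n}\tfrac12 x^TQx+g^Tx$ subject to $x\ge 0$. For index sets $A,B\subseteq\{1,\dots,n\}$, $x_A$ denotes the subvector of $x$ indexed by $A$ and $Q_{A,B}$ the submatrix with rows in $A$ and columns in $B$. For a finite index set $S$ and a vector $p=(p_j)_{j\in S}$ of probabilities, $\mathrm{rand}(S,p)$ denotes a random subset of $S$ containing each $j\in S$ independently with probability $p_j$. Generic random active set method (RAS): Step 0: given $\sigma\in(0,1/2]$, an initial active set $A$, $I=\{1,\dots,n\}\setminus A$, and $tol\ge 0$. Step 1: compute $x_I=-Q_{I,I}^{-1}g_I$ and $s_A=Q_{A,I}x_I+g_A$; set $Im=\{i\in I: x_i\le 0\}$, $Am=\{j\in A: s_j<-tol\}$, $Ip=I\setminus Im$, $Ap=A\setminus Am$. Step 2: if $Im\cup Am=\emptyset$, stop. Otherwise choose (possibly depending on the whole history) vectors $p_{Im}\in\mathbb{R}^{|Im|}$, $p_{Am}\in\mathbb{R}^{|Am|}$ with every entry in $[\sigma,1-\sigma]$, and let $Imc=\mathrm{rand}(Im,p_{Im})$, $Imf=Im\setminus Imc$, $Amc=\mathrm{rand}(Am,p_{Am})$,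 $Amf=Am\setminus Amc$ (fresh independent randomness at each iteration). Step 3: set $I\leftarrow Ip\cup Imf\cup Amc$, $A\leftarrow Ap\cup Amf\cup Imc$, and return to Step 1. *)

theory Defs
  imports "HOL-Analysis.Analysis" "HOL-Probability.Probability"
begin

text \<open>Problem data: Q :: real^'n^'n, g :: real^'n, index type 'n finite (n = CARD('n)).
  Active set A :: 'n set, inactive set I = UNIV - A.\<close>

definition sym_pos_def :: "real^'n^'n \<Rightarrow> bool" where
  "sym_pos_def Q \<longleftrightarrow> transpose Q = Q \<and> (\<forall>x. x \<noteq> 0 \<longrightarrow> x \<bullet> (Q *v x) > 0)"

text \<open>Q_{I,I} embedded as a block with the identity on the complement of I.\<close>
definition sub_block :: "real^'n^'n \<Rightarrow> 'n set \<Rightarrow> real^'n^'n" where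
  "sub_block Q I = (\<chi> i j. if i \<in> I \<and> j \<in> I then Q $ i $ j else if i = j then 1 else 0)"

definition restr :: "real^'n \<Rightarrow> 'n set \<Rightarrow> real^'n" where
  "restr v I = (\<chi> i. if i \<in> I then v $ i else 0)"

text \<open>x with x_I = - Q_{I,I}^{-1} g_I and x_A = 0.\<close>
definition ras_x :: "real^'n^'n \<Rightarrow> real^'n \<Rightarrow> 'n set \<Rightarrow> real^'n" where
  "ras_x Q g A = restr (- (matrix_inv (sub_block Q (UNIV - A)) *v restr g (UNIV - A))) (UNIV - A)"

text \<open>s_A = Q_{A,I} x_I + g_A (evaluated for j in A).\<close>
definition ras_s :: "real^'n^'n \<Rightarrow> real^'n \<Rightarrow> 'n set \<Rightarrow> real^'n" where
  "ras_s Q g A = Q *v ras_x Q g A + g"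

definition ras_Im :: "real^'n^'n \<Rightarrow> real^'n \<Rightarrow> 'n set \<Rightarrow> 'n set" where
  "ras_Im Q g A = {i. i \<notin> A \<and> ras_x Q g A $ i \<le> 0}"

definition ras_Am :: "real^'n^'n \<Rightarrow> real^'n \<Rightarrow> real \<Rightarrow> 'n set \<Rightarrow> 'n set" where
  "ras_Am Q g tol A = {j. j \<in> A \<and> ras_s Q g A $ j < - tol}"

definition ras_stops :: "real^'n^'n \<Rightarrow> real^'n \<Rightarrow> real \<Rightarrow> 'n set \<Rightarrow> bool" where
  "ras_stops Q g tol A \<longleftrightarrow> ras_Im Q g A \<union> ras_Am Q g tol A = {}"

text \<open>One iteration (Steps 2-3): S is the random set of indices of Im \<union> Am selected by rand
  (each j independently with probability p j); Imc = Im \<inter> S, Amc = Am \<inter> S.\<close>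
definition ras_next :: "real^'n^'n \<Rightarrow> real^'n \<Rightarrow> real \<Rightarrow> ('n \<Rightarrow> real) \<Rightarrow> 'n set \<Rightarrow> 'n set pmf" where
  "ras_next Q g tol p A =
     (let Im = ras_Im Q g A; Am = ras_Am Q g tol A
      in map_pmf (\<lambda>f. (A - Am) \<union> (Am - {j. f j}) \<union> (Im \<inter> {j. f j}))
           (Pi_pmf (Im \<union> Am) False (\<lambda>j. bernoulli_pmf (p j))))"

text \<open>Probability that the method, currently at active set A with past history h
  (list of previous active sets), stops within the next k iterations, when the
  probability vectors are chosen by the (history-dependent) strategy strat.\<close>
fun ras_stop_prob :: "real^'n^'n \<Rightarrow> real^'n \<Rightarrow> real \<Rightarrow> ('n set list \<Rightarrow> 'n \<Rightarrow> real)
    \<Rightarrow> nat \<Rightarrow> 'n set list \<Rightarrow> 'n set \<Rightarrow> real" where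
  "ras_stop_prob Q g tol strat 0 h A = (if ras_stops Q g tol A then 1 else 0)"
| "ras_stop_prob Q g tol strat (Suc k) h A =
     (if ras_stops Q g tol A then 1
      else measure_pmf.expectation (ras_next Q g tol (strat (h @ [A])) A)
             (\<lambda>A'. ras_stop_prob Q g tol strat k (h @ [A]) A'))"

end

theory Submission
  imports Defs
begin

definition qf :: "real^'n^'n \<Rightarrow> real^'n \<Rightarrow> real^'n \<Rightarrow> real" where
  "qf Q g x = (1/2) * (x \<bullet> (Q *v x)) + g \<bullet> x"

definition VS :: "'n set \<Rightarrow> (real^'n) set" where
  "VS A = {x. \<forall>i\<in>A. x $ i = 0}"

lemma symQ:
  fixes Q :: "real^'n^'n"
  assumes "transpose Q = Q"
  shows "u \<bullet> (Q *v v) = v \<bullet> (Q *v u)"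
proof -
  have "u \<bullet> (Q *v v) = (\<Sum>i\<in>UNIV. \<Sum>j\<in>UNIV. u$i * Q$i$j * v$j)"
    by (simp add: inner_vec_def matrix_vector_mult_def sum_distrib_left mult.assoc)
  also have "\<dots> = (\<Sum>j\<in>UNIV. \<Sum>i\<in>UNIV. u$i * Q$i$j * v$j)" by (rule sum.swap)
  also have "\<dots> = v \<bullet> (Q *v u)"
  proof -
    have "\<And>i j. Q$i$j = Q$j$i" using assms by (metis transpose_def vec_lambda_beta)
    then show ?thesis
      by (simp add: inner_vec_def matrix_vector_mult_def sum_distrib_left mult.assoc mult.commute mult.left_commute)
  qed
  finally show ?thesis .
qed

lemma qf_expand:
  fixes Q :: "real^'n^'n"
  assumes "transpose Q = Q"
  shows "qf Q g (x + d) = qf Q g x + d \<bullet> (Q *v x + g) + (1/2) * (d \<bullet> (Q *v d))"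
proof -
  have "x \<bullet> (Q *v d) = d \<bullet> (Q *v x)" using symQ[OF assms] .
  then show ?thesis
    unfolding qf_def by (simp add: matrix_vector_right_distrib inner_add_left inner_add_right algebra_simps inner_commute)
qed

lemma sub_block_inv:
  assumes "sym_pos_def Q"
  shows "invertible (sub_block Q I)"
proof -
  let ?M = "sub_block Q I"
  have inj: "inj ((*v) ?M)"
  proof (rule injI)
    fix a b assume ab: "?M *v a = ?M *v b"
    define x where "x = a - b"
    have Mx: "?M *v x = 0" using ab by (simp add: x_def matrix_vector_mult_diff_distrib)
    show "a = b"
    proof (rule ccontr)
      assume "a \<noteq> b"
      define y where "y = restr x I"
      have xQ: "x \<bullet> (?M *v x) = y \<bullet> (Q *v y) + (\<Sum>i\<in>UNIV - I. x$i * x$i)"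
      proof -
        have "x \<bullet> (?M *v x) = (\<Sum>i\<in>UNIV. x$i * (\<Sum>j\<in>UNIV. ?M$i$j * x$j))"
          by (simp add: inner_vec_def matrix_vector_mult_def)
        also have "\<dots> = (\<Sum>i\<in>UNIV. (if i \<in> I then y$i * (\<Sum>j\<in>UNIV. Q$i$j * y$j) else x$i*x$i))"
        proof (rule sum.cong[OF refl])
          fix i
          show "x$i * (\<Sum>j\<in>UNIV. ?M$i$j * x$j) = (if i \<in> I then y$i * (\<Sum>j\<in>UNIV. Q$i$j * y$j) else x$i*x$i)"
          proof (cases "i \<in> I")
            case True
            have "(\<Sum>j\<in>UNIV. ?M$i$j * x$j) = (\<Sum>j\<in>UNIV. Q$i$j * y$j)"
              by (rule sum.cong[OF refl]) (auto simp add: sub_block_def y_def restr_def True)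
            then show ?thesis using True by (simp add: y_def restr_def)
          next
            case False
            have "(\<Sum>j\<in>UNIV. ?M$i$j * x$j) = (\<Sum>j\<in>UNIV. (if j = i then x$j else 0))"
              by (rule sum.cong[OF refl]) (auto simp add: sub_block_def False)
            also have "\<dots> = x$i" by (simp add: sum.delta)
            finally show ?thesis using False by simp
          qed
        qed
        also have "\<dots> = (\<Sum>i\<in>UNIV. y$i * (\<Sum>j\<in>UNIV. Q$i$j * y$j)) + (\<Sum>i\<in>UNIV - I. x$i * x$i)"
        proof -
          have "(\<Sum>i\<in>UNIV. (if i \<in> I then y$i * (\<Sum>j\<in>UNIV. Q$i$j * y$j) else x$i*x$i))
             = (\<Sum>i\<in>UNIV. (if i \<in> I then y$i * (\<Sum>j\<in>UNIV. Q$i$j * y$j) else 0)) + (\<Sum>i\<in>UNIV. (if i \<in> I then 0 else x$i*x$i))"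
            by (simp only: sum.distrib[symmetric]) (rule sum.cong, simp, simp)
          moreover have "(\<Sum>i\<in>UNIV. (if i \<in> I then y$i * (\<Sum>j\<in>UNIV. Q$i$j * y$j) else 0)) = (\<Sum>i\<in>UNIV. y$i * (\<Sum>j\<in>UNIV. Q$i$j * y$j))"
            by (rule sum.cong[OF refl]) (simp add: y_def restr_def)
          moreover have "(\<Sum>i\<in>UNIV. (if i \<in> I then 0 else x$i*x$i)) = (\<Sum>i\<in>UNIV - I. x$i * x$i)"
            by (simp add: sum.If_cases Diff_eq)
          ultimately show ?thesis by simp
        qed
        finally show ?thesis by (simp add: inner_vec_def matrix_vector_mult_def)
      qed
      have "x \<noteq> 0" using \<open>a \<noteq> b\<close> by (simp add: x_def)
      show False
      proof (cases "y = 0")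
        case True
        then obtain k where "x$k \<noteq> 0" using \<open>x \<noteq> 0\<close> by (metis vec_eq_iff zero_index)
        have kI: "k \<notin> I"
        proof
          assume "k \<in> I"
          then have "y$k = x$k" by (simp add: y_def restr_def)
          with True \<open>x$k \<noteq> 0\<close> show False by simp
        qed
        have "(\<Sum>i\<in>UNIV - I. x$i * x$i) > 0"
          by (rule sum_pos2[of _ k]) (use kI \<open>x$k \<noteq> 0\<close> in \<open>auto simp: zero_less_mult_iff\<close>)
        then show False using xQ Mx True by simp
      next
        case False
        then have "y \<bullet> (Q *v y) > 0" using assms by (simp add: sym_pos_def_def)
        moreover have "(\<Sum>i\<in>UNIV - I. x$i * x$i) \<ge> 0" by (simp add: sum_nonneg)
        ultimately show False using xQ Mx by simp
      qed
    qed
  qed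
  then show ?thesis
    using matrix_left_invertible_injective invertible_left_inverse by blast
qed

lemma ras_x_V: "ras_x Q g A \<in> VS A"
  by (simp add: ras_x_def VS_def restr_def)

lemma ras_x_grad:
  assumes "sym_pos_def Q" and "i \<notin> A"
  shows "(Q *v ras_x Q g A + g) $ i = 0"
proof -
  let ?I = "UNIV - A"
  let ?M = "sub_block Q ?I"
  define z where "z = matrix_inv ?M *v restr g ?I"
  have inv: "invertible ?M" using sub_block_inv[OF assms(1)] .
  have "?M ** matrix_inv ?M = mat 1"
    using inv unfolding invertible_def matrix_inv_def by (rule someI_ex[where P="\<lambda>A'. ?M ** A' = mat 1 \<and> A' ** ?M = mat 1", THEN conjunct1])
  then have Mz: "?M *v z = restr g ?I"
    by (simp add: z_def matrix_vector_mul_assoc)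
  have iI: "i \<in> ?I" using assms(2) by simp
  have "(?M *v z) $ i = (\<Sum>j\<in>UNIV. Q$i$j * restr z ?I $ j)"
    unfolding matrix_vector_mult_def
    by (simp, rule sum.cong) (use iI in \<open>auto simp: sub_block_def restr_def\<close>)
  then have e1: "(\<Sum>j\<in>UNIV. Q$i$j * restr z ?I $ j) = g $ i"
    using Mz iI by (simp add: restr_def)
  have "ras_x Q g A = - restr z ?I"
    by (simp add: ras_x_def z_def restr_def vec_eq_iff)
  then have "(Q *v ras_x Q g A) $ i = - (\<Sum>j\<in>UNIV. Q$i$j * restr z ?I $ j)"
    by (simp add: matrix_vector_mult_def sum_negf[symmetric])
  then show ?thesis using e1 by simp
qed

lemma VS_orth:
  assumes "sym_pos_def Q" and "d \<in> VS A"
  shows "d \<bullet> (Q *v ras_x Q g A + g) = 0"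
proof -
  have "d \<bullet> (Q *v ras_x Q g A + g) = (\<Sum>i\<in>UNIV. d$i * (Q *v ras_x Q g A + g)$i)"
    by (simp add: inner_vec_def)
  also have "\<dots> = 0"
  proof (rule sum.neutral, intro ballI)
    fix i show "d$i * (Q *v ras_x Q g A + g)$i = 0"
      using ras_x_grad[OF assms(1), of i A g] assms(2) by (cases "i \<in> A") (auto simp: VS_def)
  qed
  finally show ?thesis .
qed

lemma posdef: "sym_pos_def Q \<Longrightarrow> d \<noteq> 0 \<Longrightarrow> d \<bullet> (Q *v d) > 0"
  by (simp add: sym_pos_def_def)

lemma psd: "sym_pos_def Q \<Longrightarrow> d \<bullet> (Q *v d) \<ge> 0"
  by (cases "d = 0") (auto dest: posdef)

lemma F1:
  assumes "sym_pos_def Q" and "y \<in> VS A"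
  shows "qf Q g y = qf Q g (ras_x Q g A) + (1/2) * ((y - ras_x Q g A) \<bullet> (Q *v (y - ras_x Q g A)))"
proof -
  have sy: "transpose Q = Q" using assms(1) by (simp add: sym_pos_def_def)
  have d: "y - ras_x Q g A \<in> VS A" using assms(2) ras_x_V[of Q g A] by (simp add: VS_def)
  have "qf Q g y = qf Q g (ras_x Q g A + (y - ras_x Q g A))" by simp
  also have "\<dots> = qf Q g (ras_x Q g A) + (1/2) * ((y - ras_x Q g A) \<bullet> (Q *v (y - ras_x Q g A)))"
    using qf_expand[OF sy, of g "ras_x Q g A" "y - ras_x Q g A"] VS_orth[OF assms(1) d] by simp
  finally show ?thesis .
qed

lemma F1_le: "sym_pos_def Q \<Longrightarrow> y \<in> VS A \<Longrightarrow> qf Q g (ras_x Q g A) \<le> qf Q g y"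
  using F1 psd by fastforce

lemma F2:
  assumes Q: "sym_pos_def Q" and jA: "j \<in> A" and sj: "(Q *v ras_x Q g A + g) $ j < 0"
  shows "ras_x Q g (A - {j}) $ j > 0" and "qf Q g (ras_x Q g (A - {j})) < qf Q g (ras_x Q g A)"
proof -
  have sy: "transpose Q = Q" using Q by (simp add: sym_pos_def_def)
  define x where "x = ras_x Q g A"
  define x1 where "x1 = ras_x Q g (A - {j})"
  define d where "d = x1 - x"
  have xV: "x \<in> VS A" unfolding x_def by (rule ras_x_V)
  have x1V: "x1 \<in> VS (A - {j})" unfolding x1_def by (rule ras_x_V)
  have xV1: "x \<in> VS (A - {j})" using xV by (auto simp: VS_def)
  have dot: "d \<bullet> (Q *v x + g) = d$j * (Q *v x + g)$j"
  proof -
    have "d \<bullet> (Q *v x + g) = (\<Sum>i\<in>UNIV. d$i * (Q *v x + g)$i)" by (simp add: inner_vec_def)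
    also have "\<dots> = (\<Sum>i\<in>UNIV. if i = j then d$j * (Q *v x + g)$j else 0)"
    proof (rule sum.cong[OF refl])
      fix i
      show "d$i * (Q *v x + g)$i = (if i = j then d$j * (Q *v x + g)$j else 0)"
      proof (cases "i = j")
        case False
        show ?thesis
        proof (cases "i \<in> A")
          case True
          then show ?thesis using False xV x1V by (simp add: d_def VS_def)
        next
          case nA: False
          then show ?thesis using ras_x_grad[OF Q nA, of g] False by (simp add: x_def)
        qed
      qed simp
    qed
    also have "\<dots> = d$j * (Q *v x + g)$j" by simp
    finally show ?thesis .
  qed
  have e1: "qf Q g x1 = qf Q g x + d$j * (Q *v x + g)$j + (1/2) * (d \<bullet> (Q *v d))"
    using qf_expand[OF sy, of g x d] dot by (simp add: d_def)
  have e2: "qf Q g x = qf Q g x1 + (1/2) * (d \<bullet> (Q *v d))"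
  proof -
    have "(x - x1) \<bullet> (Q *v (x - x1)) = d \<bullet> (Q *v d)"
      by (simp add: d_def matrix_vector_mult_diff_distrib inner_diff_left inner_diff_right algebra_simps)
    then show ?thesis using F1[OF Q xV1, of g] by (simp add: x1_def)
  qed
  have dne: "d \<noteq> 0"
  proof
    assume "d = 0"
    then have "x1 = x" by (simp add: d_def)
    moreover have "(Q *v x1 + g) $ j = 0" unfolding x1_def by (rule ras_x_grad[OF Q]) simp
    ultimately show False using sj by (simp add: x_def)
  qed
  have pos: "d \<bullet> (Q *v d) > 0" using posdef[OF Q dne] .
  have "d$j * (Q *v x + g)$j = - (d \<bullet> (Q *v d))" using e1 e2 by simp
  then have "d$j * (Q *v x + g)$j < 0" using pos by simp
  then have "d$j > 0" using sj by (simp add: x_def mult_less_0_iff)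
  moreover have "x$j = 0" using xV jA by (simp add: VS_def)
  ultimately show "ras_x Q g (A - {j}) $ j > 0" by (simp add: d_def x1_def)
  show "qf Q g (ras_x Q g (A - {j})) < qf Q g (ras_x Q g A)"
    using e2 pos by (simp add: x_def x1_def)
qed

lemma seg:
  assumes Q: "sym_pos_def Q" and yV: "y \<in> VS B" and ynn: "\<forall>i. y$i \<ge> 0"
    and ne: "ras_Im Q g B \<noteq> {}"
  shows "\<exists>i0 y'. i0 \<in> ras_Im Q g B \<and> y' \<in> VS (insert i0 B) \<and> (\<forall>i. y'$i \<ge> 0)
     \<and> qf Q g y' \<le> qf Q g y
     \<and> ((ras_x Q g B \<noteq> y \<and> (\<forall>i\<in>ras_Im Q g B. y$i > 0)) \<longrightarrow> qf Q g y' < qf Q g y)"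
proof -
  have sy: "transpose Q = Q" using Q by (simp add: sym_pos_def_def)
  define x where "x = ras_x Q g B"
  define N where "N = ras_Im Q g B"
  have N: "N = {i. i \<notin> B \<and> x$i \<le> 0}" by (simp add: N_def ras_Im_def x_def)
  have xV: "x \<in> VS B" unfolding x_def by (rule ras_x_V)
  define r where "r i = (if y$i = x$i then 1 else y$i / (y$i - x$i))" for i
  have finN: "finite N" by simp
  have neN: "N \<noteq> {}" using ne by (simp add: N_def)
  define t where "t = Min (r ` N)"
  have "t \<in> r ` N" unfolding t_def using finN neN by (intro Min_in) auto
  then obtain i0 where i0N: "i0 \<in> N" and ti0: "t = r i0" by auto
  have tle: "\<And>i. i \<in> N \<Longrightarrow> t \<le> r i" unfolding t_def using finN by simp
  have r01: "\<And>i. i \<in> N \<Longrightarrow> 0 \<le> r i \<and> r i \<le> 1"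
  proof -
    fix i assume "i \<in> N"
    then have xi: "x$i \<le> 0" using N by simp
    have yi: "y$i \<ge> 0" using ynn by simp
    show "0 \<le> r i \<and> r i \<le> 1"
    proof (cases "y$i = x$i")
      case False
      then have "y$i - x$i > 0" using xi yi by simp
      then show ?thesis using False xi yi by (simp add: r_def divide_le_eq_1)
    qed (simp add: r_def)
  qed
  have t0: "0 \<le> t" and t1: "t \<le> 1" using r01[OF i0N] ti0 by auto
  define d where "d = x - y"
  define y' where "y' = y + t *\<^sub>R d"
  have comp: "\<And>k. y'$k = y$k + t * (x$k - y$k)" by (simp add: y'_def d_def)
  have y'V: "y' \<in> VS (insert i0 B)"
  proof -
    have "\<forall>k\<in>B. y'$k = 0" using xV yV by (simp add: comp VS_def)
    moreover have "y'$i0 = 0"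
    proof (cases "y$i0 = x$i0")
      case True
      then show ?thesis using i0N N ynn[rule_format, of i0] by (simp add: comp)
    next
      case False
      then have "y$i0 - x$i0 \<noteq> 0" by simp
      then show ?thesis using False ti0 by (simp add: comp r_def field_simps)
    qed
    ultimately show ?thesis by (simp add: VS_def)
  qed
  have y'nn: "\<forall>k. y'$k \<ge> 0"
  proof
    fix k
    have yk: "y$k \<ge> 0" using ynn by simp
    show "y'$k \<ge> 0"
    proof (cases "k \<in> N")
      case False
      then have "x$k \<ge> 0 \<or> k \<in> B" using N by auto
      then have xk: "x$k \<ge> 0" using xV by (auto simp: VS_def)
      have "y$k + t * (x$k - y$k) = (1 - t) * y$k + t * x$k" by (simp add: algebra_simps)
      also have "\<dots> \<ge> 0" using t0 t1 yk xk by simp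
      finally show ?thesis by (simp add: comp)
    next
      case True
      then have xk: "x$k \<le> 0" using N by simp
      show ?thesis
      proof (cases "y$k = x$k")
        case True then show ?thesis using yk by (simp add: comp)
      next
        case False
        then have pos: "y$k - x$k > 0" using xk yk by simp
        have "t \<le> y$k / (y$k - x$k)" using tle[OF \<open>k \<in> N\<close>] False by (simp add: r_def)
        then have "t * (y$k - x$k) \<le> y$k" using pos by (simp add: le_divide_eq)
        then show ?thesis by (simp add: comp algebra_simps)
      qed
    qed
  qed
  have grad: "d \<bullet> (Q *v y + g) = - (d \<bullet> (Q *v d))"
  proof -
    have a: "qf Q g x = qf Q g y + d \<bullet> (Q *v y + g) + (1/2) * (d \<bullet> (Q *v d))"
      using qf_expand[OF sy, of g y d] by (simp add: d_def)
    have "(y - x) \<bullet> (Q *v (y - x)) = d \<bullet> (Q *v d)"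
      by (simp add: d_def matrix_vector_mult_diff_distrib inner_diff_left inner_diff_right algebra_simps)
    then have b: "qf Q g y = qf Q g x + (1/2) * (d \<bullet> (Q *v d))"
      using F1[OF Q yV, of g] by (simp add: x_def)
    show ?thesis using a b by simp
  qed
  have qy': "qf Q g y' = qf Q g y - (t - t^2/2) * (d \<bullet> (Q *v d))"
  proof -
    have "qf Q g y' = qf Q g y + (t *\<^sub>R d) \<bullet> (Q *v y + g) + (1/2) * ((t *\<^sub>R d) \<bullet> (Q *v (t *\<^sub>R d)))"
      using qf_expand[OF sy, of g y "t *\<^sub>R d"] by (simp add: y'_def)
    also have "\<dots> = qf Q g y + t * (d \<bullet> (Q *v y + g)) + (1/2) * (t^2 * (d \<bullet> (Q *v d)))"
      by (simp add: matrix_vector_mult_scaleR power2_eq_square)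
    also have "\<dots> = qf Q g y - (t - t^2/2) * (d \<bullet> (Q *v d))"
      unfolding grad by (simp add: algebra_simps power2_eq_square)
    finally show ?thesis .
  qed
  have co: "t - t^2/2 \<ge> 0" using t0 t1 by (simp add: power2_eq_square) (smt (verit) mult_left_le)
  have le: "qf Q g y' \<le> qf Q g y"
    using qy' co psd[OF Q, of d] by (simp add: mult_nonneg_nonneg)
  have strict: "qf Q g y' < qf Q g y" if h: "x \<noteq> y" "\<forall>i\<in>N. y$i > 0"
  proof -
    have "d \<noteq> 0" using h(1) by (simp add: d_def)
    then have dq: "d \<bullet> (Q *v d) > 0" using posdef[OF Q] by blast
    have "r i0 > 0"
    proof (cases "y$i0 = x$i0")
      case False
      have xk: "x$i0 \<le> 0" using i0N N by simp
      have "y$i0 > 0" using h(2) i0N by simp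
      then show ?thesis using False xk by (simp add: r_def)
    qed (simp add: r_def)
    then have "t > 0" using ti0 by simp
    then have "t - t^2/2 > 0" using t1 by (simp add: power2_eq_square)
    then show ?thesis using qy' dq by simp
  qed
  show ?thesis
    apply (rule exI[of _ i0], rule exI[of _ y'])
    using i0N y'V y'nn le strict by (simp add: N_def x_def)
qed

definition rstep :: "real^'n^'n \<Rightarrow> real^'n \<Rightarrow> real \<Rightarrow> 'n set \<Rightarrow> 'n set \<Rightarrow> bool" where
  "rstep Q g tol A A' \<longleftrightarrow> (\<exists>S. S \<subseteq> ras_Im Q g A \<union> ras_Am Q g tol A \<and>
      A' = (A - ras_Am Q g tol A) \<union> (ras_Am Q g tol A - {j. j \<in> S}) \<union> (ras_Im Q g A \<inter> {j. j \<in> S}))"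

fun reach :: "real^'n^'n \<Rightarrow> real^'n \<Rightarrow> real \<Rightarrow> nat \<Rightarrow> 'n set \<Rightarrow> bool" where
  "reach Q g tol 0 A = ras_stops Q g tol A"
| "reach Q g tol (Suc m) A = (ras_stops Q g tol A \<or> (\<exists>A'. rstep Q g tol A A' \<and> reach Q g tol m A'))"

lemma reach_stops: "ras_stops Q g tol A \<Longrightarrow> reach Q g tol m A"
  by (cases m) auto

lemma reach_mono: "reach Q g tol m A \<Longrightarrow> m \<le> m' \<Longrightarrow> reach Q g tol m' A"
proof (induction m arbitrary: m' A)
  case 0
  then show ?case using reach_stops by simp
next
  case (Suc m)
  then obtain m'' where m': "m' = Suc m''" and "m \<le> m''" by (cases m') auto
  then show ?case using Suc by auto
qed

lemma Am_sub: "ras_Am Q g tol A \<subseteq> A" by (auto simp: ras_Am_def)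
lemma Im_sub: "ras_Im Q g A \<inter> A = {}" by (auto simp: ras_Im_def)

lemma rstep_add: "i \<in> ras_Im Q g B \<Longrightarrow> rstep Q g tol B (insert i B)"
  unfolding rstep_def
  apply (rule exI[of _ "{i}"])
  using Am_sub[of Q g tol B] Im_sub[of Q g B] by auto

lemma rstep_rem: "j \<in> ras_Am Q g tol A \<Longrightarrow> ras_Im Q g A = {} \<Longrightarrow> rstep Q g tol A (A - {j})"
  unfolding rstep_def
  apply (rule exI[of _ "{j}"])
  using Am_sub[of Q g tol A] by auto

lemma W:
  assumes Q: "sym_pos_def Q"
  shows "\<forall>B y. card (UNIV - B) = k \<longrightarrow> y \<in> VS B \<longrightarrow> (\<forall>i. y$i \<ge> 0) \<longrightarrow> qf Q g y \<le> c
     \<longrightarrow> (\<forall>B'. ras_Im Q g B' = {} \<longrightarrow> qf Q g (ras_x Q g B') \<le> c \<longrightarrow> reach Q g tol M B')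
     \<longrightarrow> reach Q g tol (M + k) B"
proof (induction k)
  case 0
  show ?case
  proof (intro allI impI)
    fix B and y
    assume "card (UNIV - B) = 0" "y \<in> VS B" "\<forall>i. y$i \<ge> 0" "qf Q g y \<le> c"
      and H: "\<forall>B'. ras_Im Q g B' = {} \<longrightarrow> qf Q g (ras_x Q g B') \<le> c \<longrightarrow> reach Q g tol M B'"
    then have "B = UNIV" by auto
    then have "ras_Im Q g B = {}" by (simp add: ras_Im_def)
    moreover have "qf Q g (ras_x Q g B) \<le> c" using order_trans[OF F1_le[OF Q \<open>y \<in> VS B\<close>, of g] \<open>qf Q g y \<le> c\<close>] .
    ultimately show "reach Q g tol (M + 0) B" using H by simp
  qed
next
  case (Suc k)
  show ?case
  proof (intro allI impI)
    fix B and y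
    assume cB: "card (UNIV - B) = Suc k" and yV: "y \<in> VS B" and ynn: "\<forall>i. y$i \<ge> 0" and yc: "qf Q g y \<le> c"
      and H: "\<forall>B'. ras_Im Q g B' = {} \<longrightarrow> qf Q g (ras_x Q g B') \<le> c \<longrightarrow> reach Q g tol M B'"
    show "reach Q g tol (M + Suc k) B"
    proof (cases "ras_Im Q g B = {}")
      case True
      have "qf Q g (ras_x Q g B) \<le> c" using order_trans[OF F1_le[OF Q yV, of g] yc] .
      then have "reach Q g tol M B" using H True by simp
      then show ?thesis by (rule reach_mono) simp
    next
      case False
      obtain i0 y' where i0: "i0 \<in> ras_Im Q g B" and y'V: "y' \<in> VS (insert i0 B)"
        and y'nn: "\<forall>i. y'$i \<ge> 0" and y'le: "qf Q g y' \<le> qf Q g y"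
        using seg[OF Q yV ynn False] by blast
      have i0B: "i0 \<notin> B" using i0 by (simp add: ras_Im_def)
      have "card (UNIV - insert i0 B) = k"
      proof -
        have "UNIV - insert i0 B = (UNIV - B) - {i0}" by auto
        then show ?thesis using cB i0B by simp
      qed
      then have "reach Q g tol (M + k) (insert i0 B)"
      proof -
        have "qf Q g y' \<le> c" using y'le yc by simp
        then show ?thesis using Suc.IH \<open>card (UNIV - insert i0 B) = k\<close> y'V y'nn H by blast
      qed
      then show ?thesis using rstep_add[OF i0, of tol] by auto
    qed
  qed
qed

definition kk :: "real^'n^'n \<Rightarrow> real^'n \<Rightarrow> 'n set \<Rightarrow> nat" where
  "kk Q g A = card {B. ras_Im Q g B = {} \<and> qf Q g (ras_x Q g B) < qf Q g (ras_x Q g A)}"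

lemma kk_less:
  assumes "ras_Im Q g B = {}" "qf Q g (ras_x Q g B) < qf Q g (ras_x Q g A)"
  shows "kk Q g B < kk Q g A"
  unfolding kk_def
proof (rule psubset_card_mono)
  show "finite {B. ras_Im Q g B = {} \<and> qf Q g (ras_x Q g B) < qf Q g (ras_x Q g A)}" by simp
  show "{Ba. ras_Im Q g Ba = {} \<and> qf Q g (ras_x Q g Ba) < qf Q g (ras_x Q g B)}
      \<subset> {B. ras_Im Q g B = {} \<and> qf Q g (ras_x Q g B) < qf Q g (ras_x Q g A)}"
    using assms by (auto intro!: exI[of _ B])
qed



lemma outer:
  fixes Q :: "real^'n^'n"
  assumes Q: "sym_pos_def Q" and tol: "tol \<ge> 0"
  shows "ras_Im Q g A = {} \<Longrightarrow> reach Q g tol ((kk Q g A + 1) * (CARD('n) + 2)) A"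
proof (induction "kk Q g A" arbitrary: A rule: less_induct)
  case less
  let ?N = "CARD('n)"
  let ?M = "kk Q g A * (?N + 2)"
  let ?f = "\<lambda>B. qf Q g (ras_x Q g B)"
  have H: "reach Q g tol ?M B'" if "ras_Im Q g B' = {}" "?f B' < ?f A" for B'
  proof -
    have lt: "kk Q g B' < kk Q g A" using kk_less[OF that] .
    have "reach Q g tol ((kk Q g B' + 1) * (?N + 2)) B'" using less(1)[OF lt that(1)] .
    moreover have "(kk Q g B' + 1) * (?N + 2) \<le> ?M"
      using mult_le_mono1[of "kk Q g B' + 1" "kk Q g A" "?N + 2"] lt by simp
    ultimately show ?thesis by (rule reach_mono)
  qed
  show ?case
  proof (cases "ras_stops Q g tol A")
    case True then show ?thesis by (rule reach_stops)
  next
    case False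
    then obtain j where jAm: "j \<in> ras_Am Q g tol A" using less(2) by (auto simp: ras_stops_def)
    have jA: "j \<in> A" and sj: "(Q *v ras_x Q g A + g) $ j < 0"
      using jAm tol by (auto simp: ras_Am_def ras_s_def)
    define A1 where "A1 = A - {j}"
    have x1j: "ras_x Q g A1 $ j > 0" and fA1: "?f A1 < ?f A"
      using F2[OF Q jA sj] by (simp_all add: A1_def)
    have st1: "rstep Q g tol A A1" unfolding A1_def by (rule rstep_rem[OF jAm less(2)])
    show ?thesis
    proof (cases "ras_Im Q g A1 = {}")
      case True
      have "reach Q g tol ?M A1" using H[OF True fA1] .
      then have "reach Q g tol (Suc ?M) A" using st1 by auto
      then show ?thesis by (rule reach_mono) simp
    next
      case False
      define y where "y = ras_x Q g A"
      have yV: "y \<in> VS A1" using ras_x_V[of Q g A] by (auto simp: VS_def y_def A1_def)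
      have ypos: "y$i > 0" if "i \<notin> A" for i
        using less(2) that by (auto simp: ras_Im_def y_def)
      have ynn: "\<forall>i. y$i \<ge> 0"
      proof
        fix i show "y$i \<ge> 0"
          using ypos[of i] ras_x_V[of Q g A] by (cases "i \<in> A") (auto simp: VS_def y_def)
      qed
      have ne: "ras_x Q g A1 \<noteq> y"
        using x1j ras_x_V[of Q g A] jA by (auto simp: VS_def y_def)
      have allp: "\<forall>i\<in>ras_Im Q g A1. y$i > 0"
      proof
        fix i assume "i \<in> ras_Im Q g A1"
        then have "i \<notin> A1" "ras_x Q g A1 $ i \<le> 0" by (auto simp: ras_Im_def)
        then have "i \<notin> A" using x1j by (auto simp: A1_def)
        then show "y$i > 0" by (rule ypos)
      qed
      obtain i0 y' where i0: "i0 \<in> ras_Im Q g A1" and y'V: "y' \<in> VS (insert i0 A1)"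
        and y'nn: "\<forall>i. y'$i \<ge> 0" and y'lt: "qf Q g y' < qf Q g y"
        using seg[OF Q yV ynn False] ne allp by blast
      define B2 where "B2 = insert i0 A1"
      have HH: "\<forall>B'. ras_Im Q g B' = {} \<longrightarrow> ?f B' \<le> qf Q g y' \<longrightarrow> reach Q g tol ?M B'"
        using H y'lt by (auto simp: y_def)
      have "reach Q g tol (?M + card (UNIV - B2)) B2"
        using W[OF Q, where k="card (UNIV - B2)" and g=g and c="qf Q g y'" and tol=tol and M="?M"]
          y'V y'nn HH unfolding B2_def by blast
      then have "reach Q g tol (Suc (?M + card (UNIV - B2))) A1"
        using rstep_add[OF i0, of tol] by (auto simp: B2_def)
      then have r: "reach Q g tol (Suc (Suc (?M + card (UNIV - B2)))) A"
        using st1 by auto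
      have "card (UNIV - B2) \<le> ?N" by (simp add: card_mono)
      then have "Suc (Suc (?M + card (UNIV - B2))) \<le> (kk Q g A + 1) * (?N + 2)" by simp
      with r show ?thesis by (rule reach_mono)
    qed
  qed
qed

lemma reach_all:
  fixes Q :: "real^'n^'n"
  assumes Q: "sym_pos_def Q" and tol: "tol \<ge> 0"
  shows "reach Q g tol ((card (UNIV :: 'n set set) + 1) * (CARD('n) + 2) + CARD('n)) A"
proof -
  let ?M = "(card (UNIV :: 'n set set) + 1) * (CARD('n) + 2)"
  have HH: "\<forall>B'. ras_Im Q g B' = {} \<longrightarrow> qf Q g (ras_x Q g B') \<le> qf Q g 0 \<longrightarrow> reach Q g tol ?M B'"
  proof (intro allI impI)
    fix B' assume "ras_Im Q g B' = {}"
    then have r: "reach Q g tol ((kk Q g B' + 1) * (CARD('n) + 2)) B'" using outer[OF Q tol] by blast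
    have "kk Q g B' \<le> card (UNIV :: 'n set set)" unfolding kk_def by (rule card_mono) auto
    then have "(kk Q g B' + 1) * (CARD('n) + 2) \<le> ?M"
      using mult_le_mono1[of "kk Q g B' + 1" "card (UNIV :: 'n set set) + 1" "CARD('n) + 2"] by simp
    with r show "reach Q g tol ?M B'" by (rule reach_mono)
  qed
  have "(0::real^'n) \<in> VS A" by (simp add: VS_def)
  moreover have "\<forall>i. (0::real) \<le> (0::real^'n)$i" by simp
  ultimately have "reach Q g tol (?M + card (UNIV - A)) A"
    using W[OF Q, where k="card (UNIV - A)" and g=g and c="qf Q g 0" and tol=tol and M="?M"] HH
    by blast
  moreover have "card (UNIV - A) \<le> CARD('n)" by (simp add: card_mono)
  ultimately show ?thesis using reach_mono by fastforce
qed

lemma prob_nonneg: "0 \<le> ras_stop_prob Q g tol strat k h A"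
proof (induction k arbitrary: h A)
  case 0 then show ?case by simp
next
  case (Suc k) then show ?case by (auto intro!: integral_nonneg)
qed

lemma expect_ge:
  fixes M :: "'a pmf"
  assumes "finite (UNIV :: 'a set)" "\<And>x. f x \<ge> 0"
  shows "pmf M a * f a \<le> measure_pmf.expectation M f"
proof -
  have "measure_pmf.expectation M f = (\<Sum>x\<in>UNIV. f x * pmf M x)"
    by (rule integral_measure_pmf_real) (use assms in auto)
  moreover have "f a * pmf M a \<le> (\<Sum>x\<in>UNIV. f x * pmf M x)"
    by (rule member_le_sum) (use assms in auto)
  ultimately show ?thesis by (simp add: mult.commute)
qed

lemma step_prob:
  fixes Q :: "real^'n^'n"
  assumes p: "\<forall>j. \<sigma> \<le> p j \<and> p j \<le> 1 - \<sigma>" and s0: "0 < \<sigma>" and st: "rstep Q g tol A A'"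
  shows "\<sigma> ^ CARD('n) \<le> pmf (ras_next Q g tol p A) A'"
proof -
  let ?Im = "ras_Im Q g A" and ?Am = "ras_Am Q g tol A"
  let ?F = "\<lambda>f. (A - ?Am) \<union> (?Am - {j. f j}) \<union> (?Im \<inter> {j. f j})"
  let ?P = "Pi_pmf (?Im \<union> ?Am) False (\<lambda>j. bernoulli_pmf (p j))"
  obtain S where S: "S \<subseteq> ?Im \<union> ?Am" and A': "A' = ?F (\<lambda>j. j \<in> S)"
    using st unfolding rstep_def by auto
  define f0 where "f0 = (\<lambda>j. j \<in> S)"
  have s1: "\<sigma> \<le> 1" using p by (metis add.commute diff_add_cancel le_add_same_cancel2 order_trans s0 less_le)
  have "pmf ?P f0 = (\<Prod>x\<in>?Im \<union> ?Am. pmf (bernoulli_pmf (p x)) (f0 x))"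
    by (rule pmf_Pi') (use S in \<open>auto simp: f0_def\<close>)
  also have "\<dots> \<ge> (\<Prod>x\<in>?Im \<union> ?Am. \<sigma>)"
  proof (rule prod_mono, intro ballI conjI)
    fix x
    have px: "0 \<le> p x" "p x \<le> 1" "\<sigma> \<le> p x" "\<sigma> \<le> 1 - p x" using p s0 by (smt (verit))+
    show "0 \<le> \<sigma>" using s0 by simp
    show "\<sigma> \<le> pmf (bernoulli_pmf (p x)) (f0 x)"
      using px by (cases "f0 x") auto
  qed
  finally have a: "\<sigma> ^ card (?Im \<union> ?Am) \<le> pmf ?P f0" by simp
  have "\<sigma> ^ CARD('n) \<le> \<sigma> ^ card (?Im \<union> ?Am)"
    by (rule power_decreasing) (use s0 s1 in \<open>auto simp: card_mono\<close>)
  also note a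
  also have "pmf ?P f0 \<le> pmf (map_pmf ?F ?P) A'"
  proof -
    have "pmf ?P f0 = measure_pmf.prob ?P {f0}" by (simp add: measure_pmf_single)
    also have "\<dots> \<le> measure_pmf.prob ?P (?F -` {A'})"
      by (rule measure_pmf.finite_measure_mono) (auto simp: A' f0_def)
    also have "\<dots> = pmf (map_pmf ?F ?P) A'" by (simp add: pmf_map)
    finally show ?thesis .
  qed
  also have "\<dots> = pmf (ras_next Q g tol p A) A'" by (simp add: ras_next_def Let_def)
  finally show ?thesis .
qed

lemma reach_prob:
  fixes Q :: "real^'n^'n"
  assumes p: "\<forall>hs j. \<sigma> \<le> strat hs j \<and> strat hs j \<le> 1 - \<sigma>" and s0: "0 < \<sigma>"
  shows "reach Q g tol k A \<Longrightarrow> \<sigma> ^ (CARD('n) * k) \<le> ras_stop_prob Q g tol strat k h A"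
proof (induction k arbitrary: h A)
  case 0 then show ?case by simp
next
  case (Suc k)
  have s1: "\<sigma> \<le> 1" using p[rule_format, of "[]" undefined] s0 by linarith
  show ?case
  proof (cases "ras_stops Q g tol A")
    case True
    then show ?thesis using s0 s1 by (simp add: power_le_one)
  next
    case False
    then obtain A' where st: "rstep Q g tol A A'" and r: "reach Q g tol k A'" using Suc.prems by auto
    let ?P = "ras_next Q g tol (strat (h @ [A])) A"
    have "\<sigma> ^ (CARD('n) * Suc k) = \<sigma> ^ CARD('n) * \<sigma> ^ (CARD('n) * k)" by (simp add: power_add)
    also have "\<dots> \<le> pmf ?P A' * ras_stop_prob Q g tol strat k (h @ [A]) A'"
      by (rule mult_mono) (use step_prob[where p="strat (h @ [A])" and \<sigma>=\<sigma>, OF _ s0 st] p Suc.IH[OF r] s0 in auto)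
    also have "\<dots> \<le> measure_pmf.expectation ?P (\<lambda>A'. ras_stop_prob Q g tol strat k (h @ [A]) A')"
      by (rule expect_ge) (auto simp: prob_nonneg)
    finally show ?thesis using False by simp
  qed
qed


theorem lemma2p2:
  fixes Q :: "real^'n^'n" and g :: "real^'n" and \<sigma> tol :: real
  assumes "sym_pos_def Q" and "0 < \<sigma>" and "\<sigma> \<le> 1/2" and "tol \<ge> 0"
  shows "\<exists>\<delta>2 > 0. \<exists>Kbar :: nat.
           \<forall>strat :: 'n set list \<Rightarrow> 'n \<Rightarrow> real. \<forall>h A.
             (\<forall>hs j. \<sigma> \<le> strat hs j \<and> strat hs j \<le> 1 - \<sigma>) \<longrightarrow>
             ras_stop_prob Q g tol strat Kbar h A \<ge> \<delta>2"
proof -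
  define K where "K = (card (UNIV :: 'n set set) + 1) * (CARD('n) + 2) + CARD('n)"
  show ?thesis
  proof (intro exI[of _ "\<sigma> ^ (CARD('n) * K)"] conjI exI[of _ K] allI impI)
    show "0 < \<sigma> ^ (CARD('n) * K)" using assms(2) by simp
  next
    fix strat :: "'n set list \<Rightarrow> 'n \<Rightarrow> real" and h A
    assume p: "\<forall>hs j. \<sigma> \<le> strat hs j \<and> strat hs j \<le> 1 - \<sigma>"
    have "reach Q g tol K A" unfolding K_def by (rule reach_all[OF assms(1) assms(4)])
    then show "\<sigma> ^ (CARD('n) * K) \<le> ras_stop_prob Q g tol strat K h A"
      by (rule reach_prob[OF p assms(2)])
  qed
qed

end
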